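(* Let $\mathcal{A}=\{A_1,\dots,A_m\}$ be a bimodal collection of pairwise disjoint nonempty subsets of a finite abelian group $G$, with internal difference groups $H_1,\dots,H_m$, such that $|A_i|=|H_i|$ for every $i$. Let $H=H_1+H_2+\dots+H_m$. Then each $A_i$ is a coset of $H_i$, and the sets $A_1,\dots,A_m$ arise from a subdivision of cosets of $H$, i.e. $A_1\cup\dots\cup A_m$ is a union of cosets of $H$ and each $A_i$ is contained in a single coset of $H$.
   Context: $G$ is written additively. The internal difference group $H_i$ of $A_i$ is the subgroup generated by all $x-y$ with $x,y\in A_i$; $A_i$ lies in a single coset of $H_i$ and $|A_i|\le|H_i|$. A collection $\{A_1,\dots,A_m\}$ of pairwise disjoint subsets of $G$ is bimodal if for every $i$ and every $\delta\in G\setminus\{0\}$, the number $N_i(\delta)$ of pairs $(a,b)$ with $a\in A_i$, $b\in A_j$ for some $j\neq i$, and $a-b=\delta$, satisfies $N_i(\delta)\in\{0,|A_i|\}$. *)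

theory Defs
  imports Main
begin

definition is_subgroup :: "'a::ab_group_add set \<Rightarrow> bool" where
  "is_subgroup H \<longleftrightarrow> 0 \<in> H \<and> (\<forall>x\<in>H. \<forall>y\<in>H. x + y \<in> H \<and> - x \<in> H)"

definition gen_subgroup :: "'a::ab_group_add set \<Rightarrow> 'a set" where
  "gen_subgroup S = \<Inter>{H. is_subgroup H \<and> S \<subseteq> H}"

definition diff_group :: "'a::ab_group_add set \<Rightarrow> 'a set" where
  "diff_group A = gen_subgroup {x - y | x y. x \<in> A \<and> y \<in> A}"

definition is_coset :: "'a::ab_group_add set \<Rightarrow> 'a set \<Rightarrow> bool" where
  "is_coset C H \<longleftrightarrow> (\<exists>x. C = (\<lambda>h. x + h) ` H)"

definition N_count :: "(nat \<Rightarrow> 'a::ab_group_add set) \<Rightarrow> nat \<Rightarrow> nat \<Rightarrow> 'a \<Rightarrow> nat" where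
  "N_count A m i \<delta> = card {(a, b). a \<in> A i \<and> (\<exists>j<m. j \<noteq> i \<and> b \<in> A j) \<and> a - b = \<delta>}"

definition bimodal :: "(nat \<Rightarrow> 'a::ab_group_add set) \<Rightarrow> nat \<Rightarrow> bool" where
  "bimodal A m \<longleftrightarrow> (\<forall>i<m. \<forall>\<delta>. \<delta> \<noteq> 0 \<longrightarrow> N_count A m i \<delta> \<in> {0, card (A i)})"

definition sum_groups :: "(nat \<Rightarrow> 'a::ab_group_add set) \<Rightarrow> nat \<Rightarrow> 'a set" where
  "sum_groups Hs m = {(\<Sum>i<m. h i) | h. \<forall>i<m. h i \<in> Hs i}"

end

theory Submission
  imports Defs
begin

lemma gen_sub: "is_subgroup (gen_subgroup S)"
proof -
  let ?F = "{H. is_subgroup H \<and> S \<subseteq> H}"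
  have z: "0 \<in> \<Inter>?F" by (rule InterI) (simp add: is_subgroup_def)
  have a: "x + y \<in> \<Inter>?F" if "x \<in> \<Inter>?F" "y \<in> \<Inter>?F" for x y
  proof (rule InterI)
    fix H assume H: "H \<in> ?F"
    then have "x \<in> H" "y \<in> H" using that by (blast, blast)
    with H show "x + y \<in> H" by (simp add: is_subgroup_def)
  qed
  have n: "- x \<in> \<Inter>?F" if "x \<in> \<Inter>?F" for x
  proof (rule InterI)
    fix H assume H: "H \<in> ?F"
    then have "x \<in> H" using that by blast
    with H show "- x \<in> H" by (simp add: is_subgroup_def)
  qed
  have "is_subgroup (\<Inter>?F)" using z a n by (intro is_subgroup_def[THEN iffD2]) blast
  then show ?thesis unfolding gen_subgroup_def .
qed

lemma gen_sup: "S \<subseteq> gen_subgroup S"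
  unfolding gen_subgroup_def by (rule Inter_greatest) simp

lemma diff_sub: "is_subgroup (diff_group A)"
  unfolding diff_group_def by (rule gen_sub)

lemma diff_mem: "x \<in> A \<Longrightarrow> y \<in> A \<Longrightarrow> x - y \<in> diff_group A"
proof -
  assume "x \<in> A" "y \<in> A"
  then have "x - y \<in> {x - y | x y. x \<in> A \<and> y \<in> A}" by blast
  then show ?thesis unfolding diff_group_def using gen_sup by (rule subsetD[rotated])
qed

lemma part1:
  fixes A :: "'a::{finite, ab_group_add} set"
  assumes "card A = card (diff_group A)" "a \<in> A"
  shows "A = (\<lambda>h. a + h) ` diff_group A"
proof -
  have sub: "A \<subseteq> (\<lambda>h. a + h) ` diff_group A"
  proof
    fix y assume "y \<in> A"
    then have "y - a \<in> diff_group A" using assms diff_mem by blast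
    then show "y \<in> (\<lambda>h. a + h) ` diff_group A" by (intro image_eqI[of _ _ "y-a"]) auto
  qed
  have "card ((\<lambda>h. a + h) ` diff_group A) = card (diff_group A)"
    by (rule card_image) (auto simp: inj_on_def)
  then show ?thesis using sub assms(1) by (intro card_subset_eq) auto
qed

theorem theorem3p18:
  fixes A :: "nat \<Rightarrow> 'a::{finite, ab_group_add} set" and m :: nat
  assumes disj: "\<forall>i<m. \<forall>j<m. i \<noteq> j \<longrightarrow> A i \<inter> A j = {}"
    and nonempty: "\<forall>i<m. A i \<noteq> {}"
    and bim: "bimodal A m"
    and eqcard: "\<forall>i<m. card (A i) = card (diff_group (A i))"
  shows "(\<forall>i<m. is_coset (A i) (diff_group (A i)))
       \<and> (\<exists>\<C>. (\<forall>C\<in>\<C>. is_coset C (sum_groups (\<lambda>i. diff_group (A i)) m))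
              \<and> (\<Union>i<m. A i) = \<Union>\<C>)
       \<and> (\<forall>i<m. \<exists>C. is_coset C (sum_groups (\<lambda>i. diff_group (A i)) m) \<and> A i \<subseteq> C)"
proof -
  define U where "U = (\<Union>i<m. A i)"
  define H where "H = sum_groups (\<lambda>i. diff_group (A i)) m"
  have p1: "A i = (\<lambda>h. a + h) ` diff_group (A i)" if "i < m" "a \<in> A i" for i a
    using part1 eqcard that by blast
  have zero: "0 \<in> diff_group X" for X :: "'a set" using diff_sub unfolding is_subgroup_def by blast
  have HiH: "diff_group (A i) \<subseteq> H" if "i < m" for i
  proof
    fix h assume h: "h \<in> diff_group (A i)"
    define g where "g = (\<lambda>k. if k = i then h else 0)"
    have "(\<Sum>k<m. g k) = h" using that unfolding g_def by (simp add: sum.delta)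
    moreover have "\<forall>k<m. g k \<in> diff_group (A k)" using h zero unfolding g_def by auto
    ultimately show "h \<in> H" unfolding H_def sum_groups_def by blast
  qed
  have zH: "0 \<in> H"
  proof -
    have "0 = (\<Sum>k<m. (\<lambda>_. 0::'a) k) \<and> (\<forall>i<m. (\<lambda>_. 0::'a) i \<in> diff_group (A i))" using zero by simp
    then show ?thesis unfolding H_def sum_groups_def by blast
  qed
  have clos: "a + h \<in> U" if ij: "i < m" "j < m" and a: "a \<in> A i" and h: "h \<in> diff_group (A j)" for i j a h
  proof (cases "i = j")
    case True
    then have "a + h \<in> A i" using p1[OF ij(1) a] h by blast
    then show ?thesis using ij unfolding U_def by blast
  next
    case False
    obtain b where b: "b \<in> A j" using nonempty ij by blast
    define d where "d = b - a"
    have "A i \<inter> A j = {}" using disj ij False by blast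
    then have "a \<noteq> b" using a b by blast
    then have "d \<noteq> 0" unfolding d_def by simp
    define P where "P = {(x, y). x \<in> A j \<and> (\<exists>k<m. k \<noteq> j \<and> y \<in> A k) \<and> x - y = d}"
    have "(b, a) \<in> P" unfolding P_def d_def using b a ij False by auto
    moreover have "finite P" by simp
    ultimately have "card P \<noteq> 0" by auto
    moreover have "N_count A m j d = card P" unfolding N_count_def P_def by simp
    moreover have "N_count A m j d \<in> {0, card (A j)}"
      using bim \<open>d \<noteq> 0\<close> ij(2) unfolding bimodal_def by blast
    ultimately have cP: "card P = card (A j)" by simp
    have inj: "inj_on fst P" unfolding inj_on_def P_def by auto
    have "fst ` P \<subseteq> A j" unfolding P_def by auto
    moreover have "card (fst ` P) = card (A j)" using card_image[OF inj] cP by simp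
    ultimately have fP: "fst ` P = A j" by (intro card_subset_eq) auto
    have "b + h \<in> A j" using p1[OF ij(2) b] h by blast
    then have "b + h \<in> fst ` P" using fP by simp
    then obtain p where p0: "b + h = fst p" "p \<in> P" by (rule imageE)
    then have p: "p \<in> P" "fst p = b + h" by simp_all
    obtain y where "p = (b + h, y)" using p(2) by (cases p) simp
    with p(1) have "(b + h, y) \<in> P" by simp
    then obtain k where k: "k < m" "y \<in> A k" and "b + h - y = d" unfolding P_def by auto
    then have "y = a + h" unfolding d_def by (simp add: algebra_simps)
    then show ?thesis using k unfolding U_def by blast
  qed
  have closU: "u \<in> U \<Longrightarrow> u + h \<in> U" if "j < m" "h \<in> diff_group (A j)" for u h j
    using clos that unfolding U_def by blast
  have sumcl: "\<forall>u\<in>U. u + sum g I \<in> U" if "finite I" "I \<subseteq> {..<m}" "\<forall>k<m. g k \<in> diff_group (A k)" for I g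
    using that
  proof (induction I rule: finite_induct)
    case empty then show ?case by simp
  next
    case (insert x F)
    show ?case
    proof
      fix u assume "u \<in> U"
      then have "u + sum g F \<in> U" using insert by auto
      then have "u + sum g F + g x \<in> U" using closU insert by auto
      then show "u + sum g (insert x F) \<in> U" using insert by (simp add: algebra_simps)
    qed
  qed
  have UH: "u + h \<in> U" if u: "u \<in> U" and hH: "h \<in> H" for u h
  proof -
    obtain g where g: "h = sum g {..<m}" "\<forall>k<m. g k \<in> diff_group (A k)"
      using hH unfolding H_def sum_groups_def by blast
    show ?thesis using sumcl[of "{..<m}" g] g u by simp
  qed
  have s1: "\<forall>i<m. is_coset (A i) (diff_group (A i))"
  proof (intro allI impI)
    fix i assume i: "i < m"
    then obtain a where a: "a \<in> A i" using nonempty by blast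
    show "is_coset (A i) (diff_group (A i))" unfolding is_coset_def using p1[OF i a] by blast
  qed
  have s2: "\<exists>\<C>. (\<forall>C\<in>\<C>. is_coset C H) \<and> U = \<Union>\<C>"
  proof (intro exI conjI)
    let ?C = "(\<lambda>u. (\<lambda>h. u + h) ` H) ` U"
    show "\<forall>C\<in>?C. is_coset C H" unfolding is_coset_def by blast
    show "U = \<Union>?C"
    proof
      show "U \<subseteq> \<Union>?C"
      proof
        fix u assume "u \<in> U"
        moreover have "u = u + 0" by simp
        ultimately show "u \<in> \<Union>?C" using zH by blast
      qed
      show "\<Union>?C \<subseteq> U"
      proof
        fix x assume "x \<in> \<Union>?C"
        then obtain u h where "u \<in> U" "h \<in> H" "x = u + h" by blast
        then show "x \<in> U" using UH by simp
      qed
    qed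
  qed
  have s3: "\<forall>i<m. \<exists>C. is_coset C H \<and> A i \<subseteq> C"
  proof (intro allI impI)
    fix i assume i: "i < m"
    then obtain a where a: "a \<in> A i" using nonempty by blast
    have "A i \<subseteq> (\<lambda>h. a + h) ` H" using p1[OF i a] HiH[OF i] by blast
    then show "\<exists>C. is_coset C H \<and> A i \<subseteq> C" unfolding is_coset_def by blast
  qed
  show ?thesis unfolding U_def[symmetric] H_def[symmetric] using s1 s2 s3 by (intro conjI)
qed

end
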